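(* Fix an integer $r\ge2$ and two residues $s,k$ modulo $r$. Every $\mathscr C_{sk}^{(r)}$-hom-free $r$-graph is also $\mathscr C_k^{(r)}$-hom-free.
   Context: An $r$-graph is an $r$-uniform hypergraph. For $\ell>r$, the tight cycle $C_\ell^{(r)}$ has vertices $v_1,\dots,v_\ell$ and edges $\{v_i,\dots,v_{i+r-1}\}$, $1\le i\le\ell$ (indices mod $\ell$). A homomorphism $F\to G$ maps $V(F)\to V(G)$ sending each edge onto an edge. For a residue $j$ mod $r$, an $r$-graph is $\mathscr C_j^{(r)}$-hom-free if there is no homomorphism $C_\ell^{(r)}\to G$ for any $\ell>r$ with $\ell\equiv j\pmod r$. *)

theory Defs
  imports Main
begin

definition r_graph :: "nat \<Rightarrow> 'a set \<Rightarrow> 'a set set \<Rightarrow> bool" where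
  "r_graph r V E \<longleftrightarrow> finite V \<and> (\<forall>e\<in>E. e \<subseteq> V \<and> card e = r)"

definition tight_cycle_edge :: "nat \<Rightarrow> nat \<Rightarrow> nat \<Rightarrow> nat set" where
  "tight_cycle_edge r l i = {(i + j) mod l | j. j < r}"

definition tight_cycle_hom :: "nat \<Rightarrow> nat \<Rightarrow> 'a set \<Rightarrow> 'a set set \<Rightarrow> (nat \<Rightarrow> 'a) \<Rightarrow> bool" where
  "tight_cycle_hom r l V E f \<longleftrightarrow>
     f ` {0..<l} \<subseteq> V \<and> (\<forall>i<l. f ` tight_cycle_edge r l i \<in> E)"

definition cycle_hom_free :: "nat \<Rightarrow> nat \<Rightarrow> 'a set \<Rightarrow> 'a set set \<Rightarrow> bool" where
  "cycle_hom_free r j V E \<longleftrightarrow>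
     \<not> (\<exists>l f. l > r \<and> l mod r = j mod r \<and> tight_cycle_hom r l V E f)"

end

theory Submission
  imports Defs
begin
lemma wrap_edge:
  assumes "0 < l" "0 < m"
  shows "(\<lambda>x. f (x mod l)) ` tight_cycle_edge r (m * l) i = f ` tight_cycle_edge r l (i mod l)"
proof -
  have e: "(i + j) mod (m * l) mod l = (i mod l + j) mod l" for j
    by (simp add: mod_add_left_eq mod_mod_cancel)
  have "(\<lambda>x. f (x mod l)) ` tight_cycle_edge r (m * l) i = f ` ((\<lambda>x. x mod l) ` tight_cycle_edge r (m * l) i)"
    by (simp add: image_image)
  also have "(\<lambda>x. x mod l) ` tight_cycle_edge r (m * l) i = tight_cycle_edge r l (i mod l)"
    unfolding tight_cycle_edge_def
  proof (intro equalityI subsetI)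
    fix x assume "x \<in> (\<lambda>x. x mod l) ` {(i + j) mod (m * l) |j. j < r}"
    then obtain j where "j < r" "x = (i + j) mod (m * l) mod l" by blast
    then show "x \<in> {(i mod l + j) mod l |j. j < r}" using e by blast
  next
    fix x assume "x \<in> {(i mod l + j) mod l |j. j < r}"
    then obtain j where "j < r" "x = (i mod l + j) mod l" by blast
    then have "(i + j) mod (m * l) \<in> {(i + j) mod (m * l) |j. j < r}" "x = (i + j) mod (m * l) mod l" using e by auto
    then show "x \<in> (\<lambda>x. x mod l) ` {(i + j) mod (m * l) |j. j < r}" by blast
  qed
  finally show ?thesis .
qed
theorem proposition3p10:
  fixes r s k :: nat and V :: "'a set" and E :: "'a set set"
  assumes "r \<ge> 2"
    and "r_graph r V E"
    and "cycle_hom_free r (s * k) V E"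
  shows "cycle_hom_free r k V E"
proof (rule ccontr)
  assume "\<not> cycle_hom_free r k V E"
  then obtain l f where l: "l > r" "l mod r = k mod r" and h: "tight_cycle_hom r l V E f"
    unfolding cycle_hom_free_def by blast
  define m where "m = s + r"
  have m0: "0 < m" using assms(1) m_def by simp
  have l0: "0 < l" using l by simp
  have big: "m * l > r" using l m0 proof -
    have "1 * l \<le> m * l" using m0 by (intro mult_le_mono1) simp
    then show ?thesis using l by linarith
  qed
  have "m * l mod r = (s * l) mod r" unfolding m_def by (simp add: algebra_simps)
  also have "\<dots> = (s * k) mod r" using l(2) by (metis mod_mult_right_eq)
  finally have md: "m * l mod r = (s * k) mod r" .
  have "tight_cycle_hom r (m * l) V E (\<lambda>x. f (x mod l))"
    unfolding tight_cycle_hom_def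
  proof (intro conjI allI impI)
    show "(\<lambda>x. f (x mod l)) ` {0..<m * l} \<subseteq> V"
      using h l0 unfolding tight_cycle_hom_def by auto
  next
    fix i assume "i < m * l"
    show "(\<lambda>x. f (x mod l)) ` tight_cycle_edge r (m * l) i \<in> E"
      using h l0 m0 unfolding wrap_edge[OF l0 m0] tight_cycle_hom_def by simp
  qed
  then show False using assms(3) big md unfolding cycle_hom_free_def by blast
qed

end
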